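(* Let $C\in\mathbb{R}^{n\times m}$ with $n\ge 2$ be such that the DSR graph $G_{C,C^t}$ is acyclic (has no cycles). Then for every $A\in\mathcal{Q}_0(C)$ and every $B\in\mathcal{Q}_0(C^t)$, both $AB$ and $(AB)^{[2]}$ are $P_0$-matrices, and $AB$ is positive semistable.
   Context: For $M\in\mathbb{R}^{n\times m}$, $\mathcal{Q}(M)$ is the set of matrices with the same entrywise sign pattern as $M$, and $\mathcal{Q}_0(M)$ its closure. A square real matrix is a $P_0$-matrix if all principal minors are nonnegative; positive semistable if all eigenvalues have nonnegative real part. $M^{[2]}$ denotes the second additive compound of a square matrix $M$: the matrix of $u\wedge v\mapsto Mu\wedge v+u\wedge Mv$ on $\Lambda^2\mathbb{R}^n$ in the lexicographically ordered basis $e_i\wedge e_j$, $i<j$. DSR graph: for $A\in\mathbb{R}^{n\times m}$, $B\in\mathbb{R}^{m\times n}$, $G_{A,B}$ is the signed bipartite digraph with S-vertices $S_1,\dots,S_n$, R-vertices $R_1,\dots,R_m$, an arc $R_j\to S_i$ of sign $\mathrm{sign}(A_{ij})$ iff $A_{ij}\ne0$ and an arc $S_i\to R_j$ of sign $\mathrm{sign}(B_{ji})$ iff $B_{ji}\ne 0$, where antiparallel arcs of the same sign are merged into a single undirected edge. A cycle is a nonempty closed walk (traversing edges consistently with orientation) that repeats no vertex except first$=$last; a cycle of length 2 occurs only when two distinct (non-merged) arcs join the same pair of vertices. For $G_{C,C^t}$ all edges are undirected, so acyclicity means the underlying simple graph is a forest. *)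

theory Defs
  imports "Jordan_Normal_Form.DL_Rank_Submatrix" "Jordan_Normal_Form.Char_Poly"
begin

definition Q0 :: "real mat \<Rightarrow> real mat set" where
  "Q0 C = {A. A \<in> carrier_mat (dim_row C) (dim_col C) \<and>
              (\<forall>i<dim_row C. \<forall>j<dim_col C. sgn (A $$ (i,j)) \<in> {0, sgn (C $$ (i,j))})}"

definition P0_matrix :: "real mat \<Rightarrow> bool" where
  "P0_matrix M \<longleftrightarrow> square_mat M \<and>
     (\<forall>I. I \<subseteq> {0..<dim_row M} \<longrightarrow> I \<noteq> {} \<longrightarrow> det (submatrix M I I) \<ge> 0)"

definition positive_semistable :: "real mat \<Rightarrow> bool" where
  "positive_semistable M \<longleftrightarrow> square_mat M \<and>
     (\<forall>z. eigenvalue (map_mat complex_of_real M) z \<longrightarrow> Re z \<ge> 0)"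

(* lexicographically ordered basis e_i \<and> e_j, i < j, of \<Lambda>^2 R^n *)
definition wedge_pairs :: "nat \<Rightarrow> (nat \<times> nat) list" where
  "wedge_pairs n = [(i,j). i \<leftarrow> [0..<n], j \<leftarrow> [Suc i..<n]]"

(* Second additive compound: matrix of u\<and>v \<mapsto> Mu\<and>v + u\<and>Mv in the basis above.
   The coefficient of e_i\<and>e_j in M e_k\<and>e_l + e_k\<and>M e_l (i<j, k<l) is
   [l=j] M_ik - [l=i] M_jk + [k=i] M_jl - [k=j] M_il. *)
definition compound2 :: "real mat \<Rightarrow> real mat" where
  "compound2 M = (let n = dim_row M; ps = wedge_pairs n; N = length ps in
     mat N N (\<lambda>(r,c). case ps ! r of (i,j) \<Rightarrow> case ps ! c of (k,l) \<Rightarrow>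
        (if l = j then M $$ (i,k) else 0) - (if l = i then M $$ (j,k) else 0)
      + (if k = i then M $$ (j,l) else 0) - (if k = j then M $$ (i,l) else 0)))"

(* DSR graph G_{C,C^t}: vertices S_i = Inl i (i<n), R_j = Inr j (j<m);
   all edges are undirected (merged antiparallel arcs of equal sign), with
   S_i -- R_j iff C_ij \<noteq> 0. *)
definition dsr_vertices :: "real mat \<Rightarrow> (nat + nat) set" where
  "dsr_vertices C = Inl ` {0..<dim_row C} \<union> Inr ` {0..<dim_col C}"

definition dsr_adj :: "real mat \<Rightarrow> nat + nat \<Rightarrow> nat + nat \<Rightarrow> bool" where
  "dsr_adj C u v \<longleftrightarrow> (\<exists>i j. i < dim_row C \<and> j < dim_col C \<and> C $$ (i,j) \<noteq> 0 \<and>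
       ((u = Inl i \<and> v = Inr j) \<or> (u = Inr j \<and> v = Inl i)))"

(* Since each undirected edge is a single edge, a cycle traverses
   distinct edges, so k \<ge> 3 (a back-and-forth along one edge is not a cycle). *)
definition dsr_cycle :: "real mat \<Rightarrow> (nat + nat) list \<Rightarrow> bool" where
  "dsr_cycle C vs \<longleftrightarrow> length vs \<ge> 3 \<and> distinct vs \<and> set vs \<subseteq> dsr_vertices C \<and>
     (\<forall>t < length vs. dsr_adj C (vs ! t) (vs ! ((Suc t) mod length vs)))"

definition dsr_acyclic :: "real mat \<Rightarrow> bool" where
  "dsr_acyclic C \<longleftrightarrow> \<not> (\<exists>vs. dsr_cycle C vs)"

end

theory Submission
  imports Defs
begin



lemma dsr_adj_sym: "dsr_adj C u v = dsr_adj C v u"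
  unfolding dsr_adj_def by blast

lemma dsr_adj_irrefl: "\<not> dsr_adj C u u"
  unfolding dsr_adj_def by auto

definition is_path :: "real mat \<Rightarrow> (nat + nat) set \<Rightarrow> (nat + nat) list \<Rightarrow> bool" where
  "is_path C V xs \<longleftrightarrow> xs \<noteq> [] \<and> distinct xs \<and> set xs \<subseteq> V \<and>
     (\<forall>t. Suc t < length xs \<longrightarrow> dsr_adj C (xs ! t) (xs ! Suc t))"

lemma leaf_exists:
  assumes acyc: "dsr_acyclic C" and V: "V \<subseteq> dsr_vertices C" "V \<noteq> {}"
  shows "\<exists>v\<in>V. \<forall>u\<in>V. \<forall>w\<in>V. dsr_adj C v u \<longrightarrow> dsr_adj C v w \<longrightarrow> u = w"
proof (rule ccontr)
  assume "\<not> ?thesis"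
  hence two: "\<And>v. v \<in> V \<Longrightarrow> \<exists>u\<in>V. \<exists>w\<in>V. dsr_adj C v u \<and> dsr_adj C v w \<and> u \<noteq> w" by blast
  have finV: "finite V" using V(1) unfolding dsr_vertices_def by (rule finite_subset) auto
  let ?P = "{xs. is_path C V xs}"
  have "?P \<subseteq> {xs. set xs \<subseteq> V \<and> length xs \<le> card V}"
  proof
    fix xs assume "xs \<in> ?P"
    hence d: "distinct xs" and s: "set xs \<subseteq> V" unfolding is_path_def by auto
    have "length xs = card (set xs)" using distinct_card[OF d] by simp
    also have "\<dots> \<le> card V" using card_mono[OF finV s] .
    finally show "xs \<in> {xs. set xs \<subseteq> V \<and> length xs \<le> card V}" using s by simp
  qed
  hence finP: "finite ?P" using finite_lists_length_le[OF finV] by (rule finite_subset)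
  from V(2) obtain v0 where "v0 \<in> V" by auto
  hence "[v0] \<in> ?P" unfolding is_path_def by auto
  hence Pne: "?P \<noteq> {}" by auto
  define L where "L = Max (length ` ?P)"
  have "L \<in> length ` ?P" unfolding L_def using finP Pne by (intro Max_in) auto
  then obtain xs where xs: "is_path C V xs" and lenxs: "length xs = L" by auto
  have maxl: "length ys \<le> L" if "is_path C V ys" for ys
    unfolding L_def using finP that by (intro Max_ge) auto
  have L1: "L \<ge> 1" using xs lenxs unfolding is_path_def by (cases xs) auto
  define x where "x = xs ! (L - 1)"
  have "L - 1 < length xs" using lenxs L1 by simp
  hence "x \<in> set xs" unfolding x_def by (rule nth_mem)
  hence xV: "x \<in> V" using xs unfolding is_path_def by blast
  from two[OF xV] obtain u w where uw: "u \<in> V" "w \<in> V" "dsr_adj C x u" "dsr_adj C x w" "u \<noteq> w" by blast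
  obtain y where y: "y \<in> V" "dsr_adj C x y" "L \<ge> 2 \<Longrightarrow> y \<noteq> xs ! (L - 2)"
  proof (cases "L \<ge> 2 \<and> u = xs ! (L - 2)")
    case True
    thus ?thesis using that[of w] uw by auto
  next
    case False
    thus ?thesis using that[of u] uw by auto
  qed
  show False
  proof (cases "y \<in> set xs")
    case False
    have "is_path C V (xs @ [y])"
      unfolding is_path_def
    proof (intro conjI allI impI)
      show "distinct (xs @ [y])" using xs False unfolding is_path_def by simp
      show "set (xs @ [y]) \<subseteq> V" using xs y unfolding is_path_def by simp
      fix t assume t: "Suc t < length (xs @ [y])"
      show "dsr_adj C ((xs @ [y]) ! t) ((xs @ [y]) ! Suc t)"
      proof (cases "Suc t < L")
        case True
        thus ?thesis using xs lenxs unfolding is_path_def by (simp add: nth_append)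
      next
        case False
        hence "t = L - 1" using t lenxs by simp
        thus ?thesis using y lenxs L1 unfolding x_def by (simp add: nth_append)
      qed
    qed simp
    from maxl[OF this] lenxs show False by simp
  next
    case True
    then obtain i where i: "i < L" "xs ! i = y" using lenxs by (metis in_set_conv_nth)
    have "i \<noteq> L - 1"
    proof
      assume "i = L - 1"
      hence "y = x" using i unfolding x_def by simp
      thus False using y(2) dsr_adj_irrefl by simp
    qed
    moreover have "i \<noteq> L - 2" if "L \<ge> 2" using i y that by auto
    ultimately have iL: "i + 3 \<le> L" using i L1
      by (cases "L \<ge> 2") auto
    define cs where "cs = drop i xs"
    have lcs: "length cs = L - i" unfolding cs_def using lenxs by simp
    have "dsr_cycle C cs"
      unfolding dsr_cycle_def
    proof (intro conjI allI impI)
      show "3 \<le> length cs" using lcs iL by simp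
      show "distinct cs" using xs unfolding cs_def is_path_def by simp
      show "set cs \<subseteq> dsr_vertices C" using xs V(1) unfolding cs_def is_path_def
        by (meson order_trans set_drop_subset)
      fix t assume t: "t < length cs"
      show "dsr_adj C (cs ! t) (cs ! (Suc t mod length cs))"
      proof (cases "Suc t < length cs")
        case True
        hence "Suc (i + t) < length xs" using lcs lenxs by simp
        hence "dsr_adj C (xs ! (i + t)) (xs ! Suc (i + t))" using xs unfolding is_path_def by blast
        thus ?thesis using True lenxs iL unfolding cs_def by simp
      next
        case False
        hence "Suc t = length cs" using t by simp
        hence "i + t = L - 1" using lcs iL by simp
        hence "cs ! t = x" unfolding cs_def x_def using lenxs iL by simp
        moreover have "cs ! (Suc t mod length cs) = y"
          using \<open>Suc t = length cs\<close> lenxs iL i unfolding cs_def by simp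
        ultimately have "cs ! t = x" "cs ! (Suc t mod length cs) = y" by auto
        thus ?thesis using y by simp
      qed
    qed
    thus False using acyc unfolding dsr_acyclic_def by blast
  qed
qed

lemma potential:
  assumes acyc: "dsr_acyclic C" and V: "V \<subseteq> dsr_vertices C"
    and rpos: "\<And>u v. rr u v > (0::real)" and rsym: "\<And>u v. rr u v = rr v u"
  shows "\<exists>f. (\<forall>v\<in>V. f v > 0) \<and> (\<forall>u\<in>V. \<forall>v\<in>V. dsr_adj C u v \<longrightarrow> f u * f v = rr u v)"
  using V
proof (induction "card V" arbitrary: V rule: less_induct)
  case less
  have finV: "finite V" using less.prems unfolding dsr_vertices_def by (rule finite_subset) auto
  show ?case
  proof (cases "V = {}")
    case True
    thus ?thesis by auto
  next
    case False
    from leaf_exists[OF acyc less.prems False] obtain v where v: "v \<in> V"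
      and leaf: "\<And>u w. u \<in> V \<Longrightarrow> w \<in> V \<Longrightarrow> dsr_adj C v u \<Longrightarrow> dsr_adj C v w \<Longrightarrow> u = w" by blast
    let ?V' = "V - {v}"
    have "card ?V' < card V" using finV v by (meson card_Diff1_less)
    moreover have "?V' \<subseteq> dsr_vertices C" using less.prems by auto
    ultimately obtain f where fpos: "\<forall>x\<in>?V'. f x > 0"
      and feq: "\<forall>x\<in>?V'. \<forall>y\<in>?V'. dsr_adj C x y \<longrightarrow> f x * f y = rr x y"
      using less.hyps by blast
    show ?thesis
    proof (cases "\<exists>u\<in>V. dsr_adj C v u")
      case True
      then obtain u where u: "u \<in> V" "dsr_adj C v u" by blast
      have uv: "u \<noteq> v" using u dsr_adj_irrefl by metis
      define g where "g = f(v := rr v u / f u)"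
      have fu: "f u > 0" using fpos u uv by auto
      show ?thesis
      proof (intro exI[of _ g] conjI ballI impI)
        fix x assume "x \<in> V"
        thus "g x > 0" using fpos fu rpos[of v u] unfolding g_def by auto
      next
        fix x y assume xy: "x \<in> V" "y \<in> V" "dsr_adj C x y"
        show "g x * g y = rr x y"
        proof (cases "x = v")
          case True
          hence "y = u" using leaf[of y u] xy u by auto
          thus ?thesis using True uv fu unfolding g_def by simp
        next
          case False
          show ?thesis
          proof (cases "y = v")
            case True
            hence "x = u" using leaf[of x u] xy u dsr_adj_sym by metis
            thus ?thesis using True uv fu unfolding g_def by (simp add: rsym[of u v])
          next
            case False
            thus ?thesis using \<open>x \<noteq> v\<close> feq xy unfolding g_def by auto
          qed
        qed
      qed
    next
      case False
      define g where "g = f(v := 1)"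
      show ?thesis
      proof (intro exI[of _ g] conjI ballI impI)
        fix x assume "x \<in> V"
        thus "g x > 0" using fpos unfolding g_def by auto
      next
        fix x y assume xy: "x \<in> V" "y \<in> V" "dsr_adj C x y"
        have "x \<noteq> v" using False xy by auto
        moreover have "y \<noteq> v" using False xy dsr_adj_sym by metis
        ultimately show "g x * g y = rr x y" using feq xy unfolding g_def by auto
      qed
    qed
  qed
qed


lemma eig_real_nonneg:
  fixes N :: "complex mat" and F :: "nat \<Rightarrow> 'x \<Rightarrow> real" and w :: "'x \<Rightarrow> real" and dd :: "nat \<Rightarrow> real"
  assumes N: "N \<in> carrier_mat k k" and X: "finite X"
    and ent: "\<And>r c. r < k \<Longrightarrow> c < k \<Longrightarrow> N $$ (r,c) = complex_of_real (\<Sum>x\<in>X. F r x * w x * F c x * dd c)"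
    and w: "\<And>x. x \<in> X \<Longrightarrow> w x \<ge> 0" and dd: "\<And>r. r < k \<Longrightarrow> dd r > 0"
    and ev: "eigenvalue N \<mu>"
  shows "Im \<mu> = 0 \<and> Re \<mu> \<ge> 0"
proof -
  from ev obtain v where v: "v \<in> carrier_vec k" "v \<noteq> 0\<^sub>v k" "N *\<^sub>v v = \<mu> \<cdot>\<^sub>v v"
    unfolding eigenvalue_def eigenvector_def using N by auto
  have row: "(\<Sum>c<k. N $$ (r,c) * v $ c) = \<mu> * v $ r" if "r < k" for r
  proof -
    have "(N *\<^sub>v v) $ r = \<mu> * v $ r" using v that by simp
    moreover have "(N *\<^sub>v v) $ r = row N r \<bullet> v" using N that by simp
    moreover have "row N r \<bullet> v = (\<Sum>c<k. N $$ (r,c) * v $ c)"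
      unfolding scalar_prod_def using N v that by (auto simp: lessThan_atLeast0 intro!: sum.cong)
    ultimately show ?thesis by simp
  qed
  define u where "u x = (\<Sum>c<k. complex_of_real (F c x * dd c) * v $ c)" for x
  define P where "P = (\<Sum>r<k. dd r * (cmod (v $ r))\<^sup>2)"
  define Q where "Q = (\<Sum>x\<in>X. w x * (cmod (u x))\<^sup>2)"
  have "(\<Sum>r<k. complex_of_real (dd r) * cnj (v $ r) * (\<mu> * v $ r)) = \<mu> * complex_of_real P"
    unfolding P_def of_real_sum sum_distrib_left
    by (rule sum.cong, simp, simp add: mult_ac flip: complex_norm_square)
  moreover have "(\<Sum>r<k. complex_of_real (dd r) * cnj (v $ r) * (\<mu> * v $ r))
     = (\<Sum>r<k. complex_of_real (dd r) * cnj (v $ r) * (\<Sum>c<k. N $$ (r,c) * v $ c))"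
    by (rule sum.cong, simp, simp add: row)
  moreover have "\<dots> = (\<Sum>r<k. \<Sum>c<k. \<Sum>x\<in>X. complex_of_real (dd r) * cnj (v $ r) * (complex_of_real (F r x * w x * F c x * dd c) * v $ c))"
    by (rule sum.cong, simp, simp add: ent sum_distrib_left sum_distrib_right of_real_sum)
  moreover have "\<dots> = (\<Sum>x\<in>X. complex_of_real (w x) * (cnj (u x) * u x))"
  proof -
    have "(\<Sum>r<k. \<Sum>c<k. \<Sum>x\<in>X. complex_of_real (dd r) * cnj (v $ r) * (complex_of_real (F r x * w x * F c x * dd c) * v $ c))
       = (\<Sum>x\<in>X. \<Sum>r<k. \<Sum>c<k. complex_of_real (dd r) * cnj (v $ r) * (complex_of_real (F r x * w x * F c x * dd c) * v $ c))"
      by (simp add: sum.swap[of _ "{..<k}" X] sum.swap[of _ "{..<k}" X])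
    also have "\<dots> = (\<Sum>x\<in>X. complex_of_real (w x) * (cnj (u x) * u x))"
    proof (rule sum.cong[OF refl])
      fix x
      have cu: "cnj (u x) = (\<Sum>r<k. complex_of_real (F r x * dd r) * cnj (v $ r))"
        unfolding u_def by (simp add: cnj_sum)
      show "(\<Sum>r<k. \<Sum>c<k. complex_of_real (dd r) * cnj (v $ r) * (complex_of_real (F r x * w x * F c x * dd c) * v $ c))
         = complex_of_real (w x) * (cnj (u x) * u x)"
        unfolding cu unfolding u_def sum_product unfolding sum_distrib_left
        by (rule sum.cong, simp, rule sum.cong, simp, simp add: mult_ac)
    qed
    finally show ?thesis .
  qed
  moreover have "\<dots> = complex_of_real Q"
    unfolding Q_def of_real_sum
    by (rule sum.cong, simp, simp add: mult_ac flip: complex_norm_square)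
  ultimately have eq: "\<mu> * complex_of_real P = complex_of_real Q" by simp
  have Q0: "Q \<ge> 0" unfolding Q_def using w by (intro sum_nonneg) auto
  have "\<exists>r<k. v $ r \<noteq> 0"
  proof (rule ccontr)
    assume "\<not> ?thesis"
    hence "v = 0\<^sub>v k" using v(1) by (intro eq_vecI) auto
    with v(2) show False by simp
  qed
  then obtain r0 where r0: "r0 < k" "v $ r0 \<noteq> 0" by auto
  have "P \<ge> dd r0 * (cmod (v $ r0))\<^sup>2" unfolding P_def
  proof (rule member_le_sum)
    fix x assume "x \<in> {..<k} - {r0}"
    thus "0 \<le> dd x * (cmod (v $ x))\<^sup>2" using dd[of x] by simp
  qed (use r0 in auto)
  moreover have "dd r0 * (cmod (v $ r0))\<^sup>2 > 0" using r0 dd by simp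
  ultimately have P0: "P > 0" by linarith
  have "\<mu> = complex_of_real (Q / P)" using eq P0
    by (simp add: field_simps)
  thus ?thesis using Q0 P0 by simp
qed


lemma det_uminus_mat: assumes "(A :: 'a :: comm_ring_1 mat) \<in> carrier_mat k k"
  shows "det (- A) = (-1)^k * det A"
proof -
  have "- A = (-1) \<cdot>\<^sub>m A" using assms by (intro eq_matI) auto
  thus ?thesis using assms by simp
qed

lemma prod_list_lower:
  fixes as :: "complex list"
  assumes "\<forall>a\<in>set as. Im a = 0 \<and> Re a \<ge> 0" and "Re z \<le> 0"
  shows "cmod (\<Prod>a\<leftarrow>as. z - a) \<ge> (- Re z) ^ length as"
  using assms(1)
proof (induction as)
  case (Cons a as)
  have "cmod (z - a) \<ge> - Re z"
  proof -
    have "\<bar>Re (z - a)\<bar> \<le> cmod (z - a)" by (rule abs_Re_le_cmod)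
    thus ?thesis using Cons.prems assms(2) by auto
  qed
  moreover have "cmod (\<Prod>a\<leftarrow>as. z - a) \<ge> (- Re z) ^ length as" using Cons by auto
  ultimately have "cmod (z - a) * cmod (\<Prod>a\<leftarrow>as. z - a) \<ge> (- Re z) * (- Re z) ^ length as"
    using assms(2) by (intro mult_mono) auto
  thus ?case by (simp add: norm_mult)
qed simp

lemma prod_list_real:
  fixes as :: "complex list"
  assumes "\<forall>a\<in>set as. Im a = 0"
  shows "(\<Prod>a\<leftarrow>as. 0 - a) = (-1)^length as * complex_of_real (\<Prod>a\<leftarrow>as. Re a)"
  using assms
proof (induction as)
  case (Cons a as)
  obtain r where a: "a = complex_of_real r"
    by (rule that[of "Re a"]) (use Cons.prems in \<open>simp add: complex_eq_iff\<close>)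
  have IH: "(\<Prod>a\<leftarrow>as. - a) = (-1)^length as * complex_of_real (\<Prod>a\<leftarrow>as. Re a)" using Cons by simp
  show ?case by (simp add: IH a algebra_simps)
qed simp

lemma det_from_eig:
  fixes N :: "complex mat"
  assumes N: "N \<in> carrier_mat k k"
    and ev: "\<And>\<mu>. eigenvalue N \<mu> \<Longrightarrow> Im \<mu> = 0 \<and> Re \<mu> \<ge> 0"
  shows "Im (det N) = 0 \<and> Re (det N) \<ge> 0"
    and "Re z \<le> 0 \<Longrightarrow> cmod (det (char_matrix N z)) \<ge> (- Re z) ^ k"
proof -
  obtain as where cp: "char_poly N = (\<Prod>a\<leftarrow>as. [:- a, 1:])" and len: "length as = k"
    using char_poly_factorized[OF N] by blast
  have pcp: "poly (char_poly N) x = (\<Prod>a\<leftarrow>as. x - a)" for x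
    unfolding cp by (simp add: poly_prod_list o_def)
  have roots: "\<forall>a\<in>set as. Im a = 0 \<and> Re a \<ge> 0"
  proof
    fix a assume a: "a \<in> set as"
    have "poly (char_poly N) a = 0" unfolding pcp using a
      by (simp add: prod_list_zero_iff)
    hence "eigenvalue N a" using eigenvalue_root_char_poly[OF N] by simp
    thus "Im a = 0 \<and> Re a \<ge> 0" by (rule ev)
  qed
  have key: "poly (char_poly N) x = (-1)^k * det (char_matrix N x)" for x
    unfolding char_poly_matrix[OF N] by (rule det_uminus_mat, use N in auto)
  {
    assume z: "Re z \<le> 0"
    have "cmod (det (char_matrix N z)) = cmod (poly (char_poly N) z)"
      unfolding key by (simp add: norm_mult norm_power)
    also have "\<dots> = cmod (\<Prod>a\<leftarrow>as. z - a)" unfolding pcp ..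
    finally show "cmod (det (char_matrix N z)) \<ge> (- Re z) ^ k"
      using prod_list_lower[OF roots z] len by simp
  }
  have cm0: "char_matrix N 0 = N" unfolding char_matrix_def using N by (intro eq_matI) auto
  have "(-1)^k * det N = (-1)^k * complex_of_real (\<Prod>a\<leftarrow>as. Re a)"
    using key[of 0] unfolding cm0 pcp prod_list_real[OF ] len using roots prod_list_real len by simp
  hence "det N = complex_of_real (\<Prod>a\<leftarrow>as. Re a)" by simp
  moreover have "(\<Prod>a\<leftarrow>as. Re a) \<ge> 0" using roots
    by (induction as) auto
  ultimately show "Im (det N) = 0 \<and> Re (det N) \<ge> 0" by simp
qed


lemma det_tendsto:
  fixes f :: "'b \<Rightarrow> 'a :: real_normed_field mat"
  assumes f: "\<And>x. f x \<in> carrier_mat k k" and g: "g \<in> carrier_mat k k"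
    and lim: "\<And>i j. i < k \<Longrightarrow> j < k \<Longrightarrow> ((\<lambda>x. f x $$ (i,j)) \<longlongrightarrow> g $$ (i,j)) F"
  shows "((\<lambda>x. det (f x)) \<longlongrightarrow> det g) F"
proof -
  have "((\<lambda>x. \<Sum>p\<in>{p. p permutes {0..<k}}. signof p * (\<Prod>i = 0..<k. f x $$ (i, p i)))
     \<longlongrightarrow> (\<Sum>p\<in>{p. p permutes {0..<k}}. signof p * (\<Prod>i = 0..<k. g $$ (i, p i)))) F"
  proof (intro tendsto_sum tendsto_mult tendsto_const tendsto_prod)
    fix p i assume "p \<in> {p. p permutes {0..<k}}" "i \<in> {0..<k}"
    hence "p i < k" by (simp add: permutes_in_image)
    thus "((\<lambda>x. f x $$ (i, p i)) \<longlongrightarrow> g $$ (i, p i)) F" using lim \<open>i \<in> {0..<k}\<close> by auto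
  qed
  thus ?thesis using det_def'[OF g] det_def'[OF f] by simp
qed


lemma limit_P:
  fixes Mf :: "real \<Rightarrow> real mat"
  assumes Mf: "\<And>\<epsilon>. Mf \<epsilon> \<in> carrier_mat k k" and M0: "M0 \<in> carrier_mat k k"
    and ev: "\<And>\<epsilon> \<mu>. \<epsilon> > 0 \<Longrightarrow> eigenvalue (map_mat complex_of_real (Mf \<epsilon>)) \<mu> \<Longrightarrow> Im \<mu> = 0 \<and> Re \<mu> \<ge> 0"
    and lim: "\<And>i j. i < k \<Longrightarrow> j < k \<Longrightarrow> ((\<lambda>\<epsilon>. Mf \<epsilon> $$ (i,j)) \<longlongrightarrow> M0 $$ (i,j)) (at_right 0)"
  shows "det M0 \<ge> 0" and "Re z < 0 \<Longrightarrow> \<not> eigenvalue (map_mat complex_of_real M0) z"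
proof -
  have ev_pos: "\<forall>\<^sub>F \<epsilon> in at_right 0. \<epsilon> > (0::real)" by (rule eventually_at_right_less)
  have cf: "map_mat complex_of_real (Mf \<epsilon>) \<in> carrier_mat k k" for \<epsilon> using Mf by simp
  have c0: "map_mat complex_of_real M0 \<in> carrier_mat k k" using M0 by simp
  have "\<forall>\<^sub>F \<epsilon> in at_right 0. det (Mf \<epsilon>) \<ge> 0"
    using ev_pos
  proof eventually_elim
    case (elim \<epsilon>)
    have "Im (det (map_mat complex_of_real (Mf \<epsilon>))) = 0 \<and> Re (det (map_mat complex_of_real (Mf \<epsilon>))) \<ge> 0"
      by (rule det_from_eig(1)[OF cf]) (rule ev[OF elim])
    thus ?case by (simp add: of_real_hom.hom_det)
  qed
  moreover have "((\<lambda>\<epsilon>. det (Mf \<epsilon>)) \<longlongrightarrow> det M0) (at_right 0)"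
    by (rule det_tendsto[OF Mf M0 lim])
  ultimately show "det M0 \<ge> 0"
    by (intro tendsto_le[OF trivial_limit_at_right_real _ tendsto_const]) auto
  assume z: "Re z < 0"
  have "\<forall>\<^sub>F \<epsilon> in at_right 0. cmod (det (char_matrix (map_mat complex_of_real (Mf \<epsilon>)) z)) \<ge> (- Re z) ^ k"
    using ev_pos
  proof eventually_elim
    case (elim \<epsilon>)
    show ?case
      by (rule det_from_eig(2)[OF cf]) (use ev[OF elim] z in auto)
  qed
  moreover have "((\<lambda>\<epsilon>. cmod (det (char_matrix (map_mat complex_of_real (Mf \<epsilon>)) z)))
     \<longlongrightarrow> cmod (det (char_matrix (map_mat complex_of_real M0) z))) (at_right 0)"
  proof (intro tendsto_norm det_tendsto)
    show "char_matrix (map_mat complex_of_real (Mf \<epsilon>)) z \<in> carrier_mat k k" for \<epsilon> using cf by simp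
    show "char_matrix (map_mat complex_of_real M0) z \<in> carrier_mat k k" using c0 by simp
    fix i j assume ij: "i < k" "j < k"
    have "((\<lambda>\<epsilon>. complex_of_real (Mf \<epsilon> $$ (i,j)) + (- z) * (if i = j then 1 else 0))
       \<longlongrightarrow> complex_of_real (M0 $$ (i,j)) + (- z) * (if i = j then 1 else 0)) (at_right 0)"
      by (intro tendsto_intros lim ij)
    moreover have "char_matrix (map_mat complex_of_real (Mf \<epsilon>)) z $$ (i, j)
       = complex_of_real (Mf \<epsilon> $$ (i,j)) + (- z) * (if i = j then 1 else 0)" for \<epsilon>
    proof -
      have "Mf \<epsilon> \<in> carrier_mat k k" by (rule Mf)
      thus ?thesis using ij unfolding char_matrix_def by simp
    qed
    moreover have "char_matrix (map_mat complex_of_real M0) z $$ (i, j)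
       = complex_of_real (M0 $$ (i,j)) + (- z) * (if i = j then 1 else 0)"
      using M0 ij unfolding char_matrix_def by simp
    ultimately show "((\<lambda>\<epsilon>. char_matrix (map_mat complex_of_real (Mf \<epsilon>)) z $$ (i, j))
       \<longlongrightarrow> char_matrix (map_mat complex_of_real M0) z $$ (i, j)) (at_right 0)"
      by simp
  qed
  ultimately have "cmod (det (char_matrix (map_mat complex_of_real M0) z)) \<ge> (- Re z) ^ k"
    by (intro tendsto_le[OF trivial_limit_at_right_real _ tendsto_const]) auto
  moreover have "(- Re z) ^ k > 0" using z by simp
  ultimately have "det (char_matrix (map_mat complex_of_real M0) z) \<noteq> 0" by auto
  thus "\<not> eigenvalue (map_mat complex_of_real M0) z" using eigenvalue_det[OF c0] by simp
qed


lemma sum_delta_lt: "(\<Sum>q<(n::nat). if q = x then (c::real) else 0) = (if x < n then c else 0)"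
  by (simp add: sum.delta)

lemma sumq:
  fixes a b c d :: real
  assumes "i < n" "j < n" "k < n" "l < n"
  shows "(\<Sum>q<(n::nat). ((if q = j then a else 0) - (if q = i then b else 0)) * ((if q = l then c else 0) - (if q = k then d else 0)))
    = (if j = l then a*c else 0) - (if j = k then a*d else 0) - (if i = l then b*c else 0) + (if i = k then b*d else 0)"
proof -
  have e: "((if q = j then a else 0) - (if q = i then b else 0)) * ((if q = l then c else 0) - (if q = k then d else 0))
    = (if q = j then (if j = l then a*c else 0) else 0) - (if q = j then (if j = k then a*d else 0) else 0)
      - (if q = i then (if i = l then b*c else 0) else 0) + (if q = i then (if i = k then b*d else 0) else 0)" for q
    by (auto simp: algebra_simps)
  show ?thesis unfolding e using assms by (simp add: sum.distrib sum_subtractf sum_delta_lt del: sum.delta)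
qed

lemma prod_entry:
  assumes "P \<in> carrier_mat n m" "Q \<in> carrier_mat m n'" "i < n" "j < n'"
  shows "(P * Q) $$ (i,j) = (\<Sum>p<m. P $$ (i,p) * Q $$ (p,j))"
proof -
  have "(P * Q) $$ (i,j) = row P i \<bullet> col Q j" using assms by simp
  also have "\<dots> = (\<Sum>p<m. P $$ (i,p) * Q $$ (p,j))"
    unfolding scalar_prod_def using assms by (auto simp: lessThan_atLeast0 intro!: sum.cong)
  finally show ?thesis .
qed

lemma wedge_pairs_bound:
  assumes "r < length (wedge_pairs n)"
  shows "fst (wedge_pairs n ! r) < snd (wedge_pairs n ! r) \<and> snd (wedge_pairs n ! r) < n"
proof -
  have "wedge_pairs n ! r \<in> set (wedge_pairs n)" using assms by simp
  thus ?thesis unfolding wedge_pairs_def by auto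
qed

lemma compound2_carrier: "X \<in> carrier_mat n n \<Longrightarrow> compound2 X \<in> carrier_mat (length (wedge_pairs n)) (length (wedge_pairs n))"
  unfolding compound2_def Let_def by auto

lemma compound2_index:
  assumes "X \<in> carrier_mat n n" "r < length (wedge_pairs n)" "c < length (wedge_pairs n)"
    "wedge_pairs n ! r = (i,j)" "wedge_pairs n ! c = (k,l)"
  shows "compound2 X $$ (r,c) = (if l = j then X $$ (i,k) else 0) - (if l = i then X $$ (j,k) else 0)
      + (if k = i then X $$ (j,l) else 0) - (if k = j then X $$ (i,l) else 0)"
  using assms unfolding compound2_def Let_def by simp

definition Phi :: "real mat \<Rightarrow> nat \<Rightarrow> nat \<Rightarrow> nat \<times> nat \<Rightarrow> real" where
  "Phi P n r x = (if snd x = snd (wedge_pairs n ! r) then P $$ (fst (wedge_pairs n ! r), fst x) else 0)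
     - (if snd x = fst (wedge_pairs n ! r) then P $$ (snd (wedge_pairs n ! r), fst x) else 0)"

definition Dw :: "(nat \<Rightarrow> real) \<Rightarrow> nat \<Rightarrow> nat \<Rightarrow> real" where
  "Dw dd n c = dd (fst (wedge_pairs n ! c)) * dd (snd (wedge_pairs n ! c))"

lemma compound_form:
  assumes P: "P \<in> carrier_mat n m" and Q: "Q \<in> carrier_mat m n"
    and dd: "\<forall>i<n. dd i > 0"
    and rel: "\<forall>i<n. \<forall>p<m. Q $$ (p,i) = dd i * e p * P $$ (i,p)"
    and r: "r < length (wedge_pairs n)" and c: "c < length (wedge_pairs n)"
  shows "compound2 (P * Q) $$ (r,c) = (\<Sum>x\<in>{..<m} \<times> {..<n}. Phi P n r x * (e (fst x) / dd (snd x)) * Phi P n c x * Dw dd n c)"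
proof -
  obtain i j where ij: "wedge_pairs n ! r = (i,j)" by (cases "wedge_pairs n ! r") auto
  obtain k l where kl: "wedge_pairs n ! c = (k,l)" by (cases "wedge_pairs n ! c") auto
  have ijb: "i < j" "j < n" using wedge_pairs_bound[OF r] ij by auto
  have klb: "k < l" "l < n" using wedge_pairs_bound[OF c] kl by auto
  have PQ: "P * Q \<in> carrier_mat n n" using P Q by simp
  have inner: "Phi P n c (p,q) * (e p / dd q) * Dw dd n c
      = (if q = l then Q $$ (p,k) else 0) - (if q = k then Q $$ (p,l) else 0)"
    if "p < m" "q < n" for p q
  proof -
    have dk: "dd k > 0" and dl: "dd l > 0" using dd klb by auto
    show ?thesis
    proof (cases "q = l")
      case True
      hence "q \<noteq> k" using klb by simp
      thus ?thesis using True kl dk dl rel that klb unfolding Phi_def Dw_def by (simp add: field_simps)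
    next
      case False
      thus ?thesis using kl dk dl rel that klb unfolding Phi_def Dw_def by (auto simp: field_simps)
    qed
  qed
  have "(\<Sum>x\<in>{..<m} \<times> {..<n}. Phi P n r x * (e (fst x) / dd (snd x)) * Phi P n c x * Dw dd n c)
     = (\<Sum>p<m. \<Sum>q<n. Phi P n r (p,q) * (e p / dd q) * Phi P n c (p,q) * Dw dd n c)"
    by (simp add: sum.cartesian_product split_def)
  also have "\<dots> = (\<Sum>p<m. \<Sum>q<n. ((if q = j then P $$ (i,p) else 0) - (if q = i then P $$ (j,p) else 0))
        * ((if q = l then Q $$ (p,k) else 0) - (if q = k then Q $$ (p,l) else 0)))"
  proof (intro sum.cong refl)
    fix p q assume "p \<in> {..<m}" "q \<in> {..<n}"
    hence "p < m" "q < n" by auto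
    have "Phi P n r (p,q) * (e p / dd q) * Phi P n c (p,q) * Dw dd n c
        = Phi P n r (p,q) * (Phi P n c (p,q) * (e p / dd q) * Dw dd n c)" by (simp add: mult_ac)
    also have "\<dots> = Phi P n r (p,q) * ((if q = l then Q $$ (p,k) else 0) - (if q = k then Q $$ (p,l) else 0))"
      using inner[OF \<open>p < m\<close> \<open>q < n\<close>] by simp
    finally show "Phi P n r (p,q) * (e p / dd q) * Phi P n c (p,q) * Dw dd n c
       = ((if q = j then P $$ (i,p) else 0) - (if q = i then P $$ (j,p) else 0))
        * ((if q = l then Q $$ (p,k) else 0) - (if q = k then Q $$ (p,l) else 0))"
      using ij unfolding Phi_def by simp
  qed
  also have "\<dots> = (\<Sum>p<m. (if j = l then P $$ (i,p) * Q $$ (p,k) else 0) - (if j = k then P $$ (i,p) * Q $$ (p,l) else 0)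
        - (if i = l then P $$ (j,p) * Q $$ (p,k) else 0) + (if i = k then P $$ (j,p) * Q $$ (p,l) else 0))"
    using ijb klb by (intro sum.cong refl sumq) auto
  also have "\<dots> = (if l = j then (P*Q) $$ (i,k) else 0) - (if l = i then (P*Q) $$ (j,k) else 0)
      + (if k = i then (P*Q) $$ (j,l) else 0) - (if k = j then (P*Q) $$ (i,l) else 0)"
  proof -
    have pe: "(P*Q) $$ (x,y) = (\<Sum>p<m. P $$ (x,p) * Q $$ (p,y))" if "x < n" "y < n" for x y
      using prod_entry[OF P Q that] .
    have lt: "i < n" "k < n" using ijb klb by auto
    show ?thesis
      unfolding pe[OF lt(1) lt(2)] pe[OF \<open>j < n\<close> lt(2)] pe[OF \<open>j < n\<close> \<open>l < n\<close>] pe[OF lt(1) \<open>l < n\<close>]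
      by (cases "j = l"; cases "j = k"; cases "i = l"; cases "i = k"; simp add: sum.distrib sum_subtractf sum_negf)
  qed
  also have "\<dots> = compound2 (P * Q) $$ (r,c)"
    by (rule compound2_index[OF PQ r c ij kl, symmetric])
  finally show ?thesis ..
qed


lemma eig_sub:
  fixes N :: "real mat" and F :: "nat \<Rightarrow> 'x \<Rightarrow> real"
  assumes N: "N \<in> carrier_mat k k" and X: "finite X"
    and ent: "\<And>r c. r < k \<Longrightarrow> c < k \<Longrightarrow> N $$ (r,c) = (\<Sum>x\<in>X. F r x * w x * F c x * dd c)"
    and w: "\<And>x. x \<in> X \<Longrightarrow> w x \<ge> 0" and dd: "\<And>r. r < k \<Longrightarrow> dd r > 0"
    and ev: "eigenvalue (map_mat complex_of_real (submatrix N I I)) \<mu>"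
  shows "Im \<mu> = 0 \<and> Re \<mu> \<ge> 0"
proof -
  let ?K = "card {i. i < k \<and> i \<in> I}"
  have pk: "pick I a < k" if "a < ?K" for a using pick_le[OF that] .
  have S: "submatrix N I I \<in> carrier_mat ?K ?K" using N by (intro carrier_matI) (auto simp: dim_submatrix)
  show ?thesis
  proof (rule eig_real_nonneg[where F="\<lambda>r x. F (pick I r) x" and dd="\<lambda>r. dd (pick I r)" and k="?K", OF _ X _ w _ ev])
    show "map_mat complex_of_real (submatrix N I I) \<in> carrier_mat ?K ?K" using S by simp
    fix r c assume rc: "r < ?K" "c < ?K"
    have "submatrix N I I $$ (r,c) = N $$ (pick I r, pick I c)"
      using rc N by (intro submatrix_index) auto
    also have "\<dots> = (\<Sum>x\<in>X. F (pick I r) x * w x * F (pick I c) x * dd (pick I c))"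
      by (rule ent[OF pk[OF rc(1)] pk[OF rc(2)]])
    finally have e: "submatrix N I I $$ (r,c) = (\<Sum>x\<in>X. F (pick I r) x * w x * F (pick I c) x * dd (pick I c))" .
    have "map_mat complex_of_real (submatrix N I I) $$ (r, c) = complex_of_real (submatrix N I I $$ (r,c))"
      using rc S by (intro index_map_mat) auto
    thus "map_mat complex_of_real (submatrix N I I) $$ (r, c) =
       complex_of_real (\<Sum>x\<in>X. F (pick I r) x * w x * F (pick I c) x * dd (pick I c))"
      using e by simp
  next
    fix r assume "r < ?K" thus "dd (pick I r) > 0" using dd pk by blast
  qed
qed


definition pertA :: "real mat \<Rightarrow> real mat \<Rightarrow> real \<Rightarrow> real mat" where
  "pertA C A \<epsilon> = mat (dim_row A) (dim_col A) (\<lambda>(i,j). A $$ (i,j) + \<epsilon> *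
      (if C $$ (i,j) \<noteq> 0 \<and> A $$ (i,j) = 0 then sgn (C $$ (i,j)) else 0))"

definition pertB :: "real mat \<Rightarrow> real mat \<Rightarrow> real \<Rightarrow> real mat" where
  "pertB C B \<epsilon> = mat (dim_row B) (dim_col B) (\<lambda>(j,i). B $$ (j,i) + \<epsilon> *
      (if C $$ (i,j) \<noteq> 0 \<and> B $$ (j,i) = 0 then sgn (C $$ (i,j)) else 0))"

lemma pert_sgn:
  fixes x c \<epsilon> :: real
  assumes "c \<noteq> 0" "sgn x \<in> {0, sgn c}" "\<epsilon> > 0"
  shows "sgn (x + \<epsilon> * (if c \<noteq> 0 \<and> x = 0 then sgn c else 0)) = sgn c"
proof (cases "x = 0")
  case True
  thus ?thesis using assms by (simp add: sgn_mult)
next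
  case False
  hence "sgn x = sgn c" using assms(2) by (auto simp: sgn_0_0)
  thus ?thesis using False by simp
qed

lemma pert_zero:
  fixes x c \<epsilon> :: real
  assumes "c = 0" "sgn x \<in> {0, sgn c}"
  shows "x + \<epsilon> * (if c \<noteq> 0 \<and> x = 0 then sgn c else 0) = 0"
  using assms by (simp add: sgn_0_0)

lemma ratio_pos:
  fixes a b c :: real
  assumes "c \<noteq> 0" "sgn a = sgn c" "sgn b = sgn c"
  shows "b / a > 0"
  using assms by (auto simp: sgn_if zero_less_divide_iff split: if_splits)

lemma Q0_A:
  assumes C: "C \<in> carrier_mat n m" and A: "A \<in> Q0 C"
  shows "A \<in> carrier_mat n m" "\<And>i j. i < n \<Longrightarrow> j < m \<Longrightarrow> sgn (A $$ (i,j)) \<in> {0, sgn (C $$ (i,j))}"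
  using assms unfolding Q0_def by auto

lemma Q0_B:
  assumes C: "C \<in> carrier_mat n m" and B: "B \<in> Q0 (transpose_mat C)"
  shows "B \<in> carrier_mat m n" "\<And>i j. i < n \<Longrightarrow> j < m \<Longrightarrow> sgn (B $$ (j,i)) \<in> {0, sgn (C $$ (i,j))}"
  using assms unfolding Q0_def by auto

lemma pertA_index: "A \<in> carrier_mat n m \<Longrightarrow> i < n \<Longrightarrow> j < m \<Longrightarrow> pertA C A \<epsilon> $$ (i,j) = A $$ (i,j) + \<epsilon> *
      (if C $$ (i,j) \<noteq> 0 \<and> A $$ (i,j) = 0 then sgn (C $$ (i,j)) else 0)"
  unfolding pertA_def by simp

lemma pertB_index: "B \<in> carrier_mat m n \<Longrightarrow> i < n \<Longrightarrow> j < m \<Longrightarrow> pertB C B \<epsilon> $$ (j,i) = B $$ (j,i) + \<epsilon> *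
      (if C $$ (i,j) \<noteq> 0 \<and> B $$ (j,i) = 0 then sgn (C $$ (i,j)) else 0)"
  unfolding pertB_def by simp

lemma pertA_carrier: "A \<in> carrier_mat n m \<Longrightarrow> pertA C A \<epsilon> \<in> carrier_mat n m"
  unfolding pertA_def by auto

lemma pertB_carrier: "B \<in> carrier_mat m n \<Longrightarrow> pertB C B \<epsilon> \<in> carrier_mat m n"
  unfolding pertB_def by auto

lemma weights:
  assumes C: "C \<in> carrier_mat n m" and acyc: "dsr_acyclic C" and A: "A \<in> Q0 C"
    and B: "B \<in> Q0 (transpose_mat C)" and eps: "\<epsilon> > 0"
  shows "\<exists>dd e. (\<forall>i<n. dd i > 0) \<and> (\<forall>j<m. e j > 0) \<and>
     (\<forall>i<n. \<forall>j<m. pertB C B \<epsilon> $$ (j,i) = dd i * e j * pertA C A \<epsilon> $$ (i,j))"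
proof -
  note Ac = Q0_A(1)[OF C A] and As = Q0_A(2)[OF C A]
  note Bc = Q0_B(1)[OF C B] and Bs = Q0_B(2)[OF C B]
  let ?a = "\<lambda>i j. pertA C A \<epsilon> $$ (i,j)"
  let ?b = "\<lambda>i j. pertB C B \<epsilon> $$ (j,i)"
  have sA: "sgn (?a i j) = sgn (C $$ (i,j))" if "i < n" "j < m" "C $$ (i,j) \<noteq> 0" for i j
    unfolding pertA_index[OF Ac that(1,2)] by (rule pert_sgn[OF that(3) As[OF that(1,2)] eps])
  have sB: "sgn (?b i j) = sgn (C $$ (i,j))" if "i < n" "j < m" "C $$ (i,j) \<noteq> 0" for i j
    unfolding pertB_index[OF Bc that(1,2)] by (rule pert_sgn[OF that(3) Bs[OF that(1,2)] eps])
  have zA: "?a i j = 0" if "i < n" "j < m" "C $$ (i,j) = 0" for i j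
    unfolding pertA_index[OF Ac that(1,2)] by (rule pert_zero[OF that(3) As[OF that(1,2)]])
  have zB: "?b i j = 0" if "i < n" "j < m" "C $$ (i,j) = 0" for i j
    unfolding pertB_index[OF Bc that(1,2)] by (rule pert_zero[OF that(3) Bs[OF that(1,2)]])
  define r where "r i j = (if i < n \<and> j < m \<and> C $$ (i,j) \<noteq> 0 then ?b i j / ?a i j else 1)" for i j
  have rpos: "r i j > 0" for i j
    unfolding r_def using ratio_pos[OF _ sA sB] by auto
  define rr where "rr u v = (case u of Inl i \<Rightarrow> (case v of Inr j \<Rightarrow> r i j | Inl _ \<Rightarrow> 1)
      | Inr j \<Rightarrow> (case v of Inl i \<Rightarrow> r i j | Inr _ \<Rightarrow> 1))" for u v
  have rrpos: "rr u v > 0" for u v unfolding rr_def using rpos by (cases u; cases v) auto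
  have rrsym: "rr u v = rr v u" for u v unfolding rr_def by (cases u; cases v) auto
  obtain f where fpos: "\<forall>v\<in>dsr_vertices C. f v > 0"
    and feq: "\<forall>u\<in>dsr_vertices C. \<forall>v\<in>dsr_vertices C. dsr_adj C u v \<longrightarrow> f u * f v = rr u v"
    using potential[OF acyc subset_refl, of rr] rrpos rrsym by blast
  have dimC: "dim_row C = n" "dim_col C = m" using C by auto
  have p1: "\<forall>i<n. f (Inl i) > 0" using fpos dimC unfolding dsr_vertices_def by auto
  have p2: "\<forall>j<m. f (Inr j) > 0" using fpos dimC unfolding dsr_vertices_def by auto
  have p3: "?b i j = f (Inl i) * f (Inr j) * ?a i j" if ij: "i < n" "j < m" for i j
  proof (cases "C $$ (i,j) = 0")
    case True thus ?thesis using zA zB ij by simp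
  next
    case False
    have "dsr_adj C (Inl i) (Inr j)" unfolding dsr_adj_def using ij False dimC by auto
    moreover have "Inl i \<in> dsr_vertices C" "Inr j \<in> dsr_vertices C"
      unfolding dsr_vertices_def using ij dimC by auto
    ultimately have "f (Inl i) * f (Inr j) = rr (Inl i) (Inr j)" using feq by blast
    also have "\<dots> = r i j" unfolding rr_def by simp
    also have "\<dots> = ?b i j / ?a i j" unfolding r_def using ij False by simp
    finally have "f (Inl i) * f (Inr j) = ?b i j / ?a i j" .
    moreover have "?a i j \<noteq> 0" using sA[OF ij False] False by (auto simp: sgn_0_0)
    ultimately show ?thesis by simp
  qed
  show ?thesis
    by (rule exI[of _ "\<lambda>i. f (Inl i)"], rule exI[of _ "\<lambda>j. f (Inr j)"]) (use p1 p2 p3 in auto)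
qed

lemma pert_tendsto:
  assumes Ac: "A \<in> carrier_mat n m" and Bc: "B \<in> carrier_mat m n" and ij: "i < n" "j < n"
  shows "((\<lambda>\<epsilon>. (pertA C A \<epsilon> * pertB C B \<epsilon>) $$ (i,j)) \<longlongrightarrow> (A * B) $$ (i,j)) (at_right 0)"
proof -
  let ?a1 = "\<lambda>i p. (if C $$ (i,p) \<noteq> 0 \<and> A $$ (i,p) = 0 then sgn (C $$ (i,p)) else 0)"
  let ?b1 = "\<lambda>p j. (if C $$ (j,p) \<noteq> 0 \<and> B $$ (p,j) = 0 then sgn (C $$ (j,p)) else 0)"
  have e1: "(pertA C A \<epsilon> * pertB C B \<epsilon>) $$ (i,j) = (\<Sum>p<m. (A $$ (i,p) + \<epsilon> * ?a1 i p) * (B $$ (p,j) + \<epsilon> * ?b1 p j))" for \<epsilon>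
    unfolding prod_entry[OF pertA_carrier[OF Ac] pertB_carrier[OF Bc] ij]
    using ij by (intro sum.cong refl) (simp add: pertA_index[OF Ac] pertB_index[OF Bc])
  have e0: "(A * B) $$ (i,j) = (\<Sum>p<m. (A $$ (i,p) + 0 * ?a1 i p) * (B $$ (p,j) + 0 * ?b1 p j))"
    unfolding prod_entry[OF Ac Bc ij] by simp
  show ?thesis unfolding e1 e0 by (intro tendsto_intros)
qed

lemma sub_tendsto:
  fixes Mf :: "real \<Rightarrow> real mat"
  assumes Mf: "\<And>\<epsilon>. Mf \<epsilon> \<in> carrier_mat k k" and M0: "M0 \<in> carrier_mat k k"
    and lim: "\<And>i j. i < k \<Longrightarrow> j < k \<Longrightarrow> ((\<lambda>\<epsilon>. Mf \<epsilon> $$ (i,j)) \<longlongrightarrow> M0 $$ (i,j)) (at_right 0)"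
    and ab: "a < card {i. i < k \<and> i \<in> I}" "b < card {i. i < k \<and> i \<in> I}"
  shows "((\<lambda>\<epsilon>. submatrix (Mf \<epsilon>) I I $$ (a,b)) \<longlongrightarrow> submatrix M0 I I $$ (a,b)) (at_right 0)"
proof -
  have "submatrix (Mf \<epsilon>) I I $$ (a,b) = Mf \<epsilon> $$ (pick I a, pick I b)" for \<epsilon>
  proof -
    have "Mf \<epsilon> \<in> carrier_mat k k" by (rule Mf)
    thus ?thesis using ab by (intro submatrix_index) auto
  qed
  moreover have "submatrix M0 I I $$ (a,b) = M0 $$ (pick I a, pick I b)"
    using ab M0 by (intro submatrix_index) auto
  moreover have "((\<lambda>\<epsilon>. Mf \<epsilon> $$ (pick I a, pick I b)) \<longlongrightarrow> M0 $$ (pick I a, pick I b)) (at_right 0)"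
    using lim pick_le[OF ab(1)] pick_le[OF ab(2)] by blast
  ultimately show ?thesis by simp
qed

lemma sub_carrier: "N \<in> carrier_mat k k \<Longrightarrow> submatrix N I I \<in> carrier_mat (card {i. i < k \<and> i \<in> I}) (card {i. i < k \<and> i \<in> I})"
  by (intro carrier_matI) (auto simp: dim_submatrix)


lemma tendsto_if0:
  assumes "P \<Longrightarrow> (f \<longlongrightarrow> (L::real)) F"
  shows "((\<lambda>x. if P then f x else 0) \<longlongrightarrow> (if P then L else 0)) F"
  using assms by (cases P) auto

theorem theorem6p3:
  fixes C :: "real mat" and n m :: nat
  assumes "C \<in> carrier_mat n m" and "n \<ge> 2" and "dsr_acyclic C"
  shows "\<forall>A \<in> Q0 C. \<forall>B \<in> Q0 (transpose_mat C).
           P0_matrix (A * B) \<and> P0_matrix (compound2 (A * B)) \<and> positive_semistable (A * B)"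
proof (intro ballI conjI)
  fix A B assume A: "A \<in> Q0 C" and B: "B \<in> Q0 (transpose_mat C)"
  note C = assms(1) and acyc = assms(3)
  note Ac = Q0_A(1)[OF C A] and Bc = Q0_B(1)[OF C B]
  define Mf where "Mf \<epsilon> = pertA C A \<epsilon> * pertB C B \<epsilon>" for \<epsilon>
  have Mfc: "Mf \<epsilon> \<in> carrier_mat n n" for \<epsilon>
    unfolding Mf_def using pertA_carrier[OF Ac] pertB_carrier[OF Bc] by (rule mult_carrier_mat)
  have ABc: "A * B \<in> carrier_mat n n" using Ac Bc by simp
  have Mlim: "((\<lambda>\<epsilon>. Mf \<epsilon> $$ (i,j)) \<longlongrightarrow> (A * B) $$ (i,j)) (at_right 0)" if "i < n" "j < n" for i j
    unfolding Mf_def by (rule pert_tendsto[OF Ac Bc that])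
  have Mform: "\<exists>dd e. (\<forall>i<n. dd i > 0) \<and> (\<forall>j<m. e j > 0) \<and>
     (\<forall>r<n. \<forall>c<n. Mf \<epsilon> $$ (r,c) = (\<Sum>p\<in>{..<m}. pertA C A \<epsilon> $$ (r,p) * e p * pertA C A \<epsilon> $$ (c,p) * dd c))
     \<and> (\<forall>i<n. \<forall>p<m. pertB C B \<epsilon> $$ (p,i) = dd i * e p * pertA C A \<epsilon> $$ (i,p))"
    if eps: "\<epsilon> > 0" for \<epsilon>
  proof -
    obtain dd e where dd: "\<forall>i<n. dd i > 0" and e: "\<forall>j<m. e j > 0"
      and rel: "\<forall>i<n. \<forall>j<m. pertB C B \<epsilon> $$ (j,i) = dd i * e j * pertA C A \<epsilon> $$ (i,j)"
      using weights[OF C acyc A B eps] by blast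
    have "Mf \<epsilon> $$ (r,c) = (\<Sum>p\<in>{..<m}. pertA C A \<epsilon> $$ (r,p) * e p * pertA C A \<epsilon> $$ (c,p) * dd c)"
      if "r < n" "c < n" for r c
      unfolding Mf_def prod_entry[OF pertA_carrier[OF Ac] pertB_carrier[OF Bc] that]
      using rel that by (intro sum.cong refl) (simp add: mult_ac)
    thus ?thesis using dd e rel by blast
  qed
  show "P0_matrix (A * B)"
    unfolding P0_matrix_def
  proof (intro conjI allI impI)
    show "square_mat (A * B)" using Ac Bc by simp
    fix I assume I: "I \<subseteq> {0..<dim_row (A * B)}" "I \<noteq> {}"
    have dr: "dim_row (A * B) = n" using Ac by simp
    show "det (submatrix (A * B) I I) \<ge> 0" unfolding dr
    proof (rule limit_P(1)[where Mf = "\<lambda>\<epsilon>. submatrix (Mf \<epsilon>) I I"])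
      show "submatrix (Mf \<epsilon>) I I \<in> carrier_mat (card {i. i < n \<and> i \<in> I}) (card {i. i < n \<and> i \<in> I})" for \<epsilon>
        by (rule sub_carrier[OF Mfc])
      show "submatrix (A * B) I I \<in> carrier_mat (card {i. i < n \<and> i \<in> I}) (card {i. i < n \<and> i \<in> I})"
        by (rule sub_carrier[OF ABc])
      fix a b assume "a < card {i. i < n \<and> i \<in> I}" "b < card {i. i < n \<and> i \<in> I}"
      thus "((\<lambda>\<epsilon>. submatrix (Mf \<epsilon>) I I $$ (a,b)) \<longlongrightarrow> submatrix (A * B) I I $$ (a,b)) (at_right 0)"
        by (intro sub_tendsto[OF Mfc ABc Mlim])
    next
      fix \<epsilon> \<mu> assume eps: "(\<epsilon>::real) > 0" and ev: "eigenvalue (map_mat complex_of_real (submatrix (Mf \<epsilon>) I I)) \<mu>"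
      from Mform[OF eps] obtain dd e where dd: "\<forall>i<n. dd i > 0" and e: "\<forall>j<m. e j > 0"
        and form: "\<forall>r<n. \<forall>c<n. Mf \<epsilon> $$ (r,c) = (\<Sum>p\<in>{..<m}. pertA C A \<epsilon> $$ (r,p) * e p * pertA C A \<epsilon> $$ (c,p) * dd c)"
        by blast
      show "Im \<mu> = 0 \<and> Re \<mu> \<ge> 0"
        by (rule eig_sub[OF Mfc _ _ _ _ ev, where X = "{..<m}" and F = "\<lambda>r p. pertA C A \<epsilon> $$ (r,p)" and w = e and dd = dd])
          (use dd e form in auto)
    qed
  qed
  let ?N = "length (wedge_pairs n)"
  have CMc: "compound2 (Mf \<epsilon>) \<in> carrier_mat ?N ?N" for \<epsilon> by (rule compound2_carrier[OF Mfc])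
  have CABc: "compound2 (A * B) \<in> carrier_mat ?N ?N" by (rule compound2_carrier[OF ABc])
  have CMlim: "((\<lambda>\<epsilon>. compound2 (Mf \<epsilon>) $$ (r,c)) \<longlongrightarrow> compound2 (A * B) $$ (r,c)) (at_right 0)"
    if rc: "r < ?N" "c < ?N" for r c
  proof -
    obtain i j where ij: "wedge_pairs n ! r = (i,j)" by (cases "wedge_pairs n ! r") auto
    obtain k l where kl: "wedge_pairs n ! c = (k,l)" by (cases "wedge_pairs n ! c") auto
    have b: "i < n" "j < n" "k < n" "l < n" using wedge_pairs_bound[OF rc(1)] wedge_pairs_bound[OF rc(2)] ij kl by auto
    have e1: "compound2 (Mf \<epsilon>) $$ (r,c) = (if l = j then Mf \<epsilon> $$ (i,k) else 0) - (if l = i then Mf \<epsilon> $$ (j,k) else 0)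
      + (if k = i then Mf \<epsilon> $$ (j,l) else 0) - (if k = j then Mf \<epsilon> $$ (i,l) else 0)" for \<epsilon>
      by (rule compound2_index[OF Mfc rc ij kl])
    have e0: "compound2 (A * B) $$ (r,c) = (if l = j then (A * B) $$ (i,k) else 0) - (if l = i then (A * B) $$ (j,k) else 0)
      + (if k = i then (A * B) $$ (j,l) else 0) - (if k = j then (A * B) $$ (i,l) else 0)"
      by (rule compound2_index[OF ABc rc ij kl])
    show ?thesis unfolding e1 e0
      by (intro tendsto_intros tendsto_if0 Mlim b)
  qed
  show "P0_matrix (compound2 (A * B))"
    unfolding P0_matrix_def
  proof (intro conjI allI impI)
    show "square_mat (compound2 (A * B))" using CABc by simp
    fix I assume I: "I \<subseteq> {0..<dim_row (compound2 (A * B))}" "I \<noteq> {}"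
    have dr: "dim_row (compound2 (A * B)) = ?N" using CABc by simp
    show "det (submatrix (compound2 (A * B)) I I) \<ge> 0" unfolding dr
    proof (rule limit_P(1)[where Mf = "\<lambda>\<epsilon>. submatrix (compound2 (Mf \<epsilon>)) I I"])
      show "submatrix (compound2 (Mf \<epsilon>)) I I \<in> carrier_mat (card {i. i < ?N \<and> i \<in> I}) (card {i. i < ?N \<and> i \<in> I})" for \<epsilon>
        by (rule sub_carrier[OF CMc])
      show "submatrix (compound2 (A * B)) I I \<in> carrier_mat (card {i. i < ?N \<and> i \<in> I}) (card {i. i < ?N \<and> i \<in> I})"
        by (rule sub_carrier[OF CABc])
      fix a b assume "a < card {i. i < ?N \<and> i \<in> I}" "b < card {i. i < ?N \<and> i \<in> I}"
      thus "((\<lambda>\<epsilon>. submatrix (compound2 (Mf \<epsilon>)) I I $$ (a,b)) \<longlongrightarrow> submatrix (compound2 (A * B)) I I $$ (a,b)) (at_right 0)"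
        by (intro sub_tendsto[OF CMc CABc CMlim])
    next
      fix \<epsilon> \<mu> assume eps: "(\<epsilon>::real) > 0" and ev: "eigenvalue (map_mat complex_of_real (submatrix (compound2 (Mf \<epsilon>)) I I)) \<mu>"
      from Mform[OF eps] obtain dd e where dd: "\<forall>i<n. dd i > 0" and e: "\<forall>j<m. e j > 0"
        and rel: "\<forall>i<n. \<forall>p<m. pertB C B \<epsilon> $$ (p,i) = dd i * e p * pertA C A \<epsilon> $$ (i,p)"
        by blast
      show "Im \<mu> = 0 \<and> Re \<mu> \<ge> 0"
      proof (rule eig_sub[OF CMc _ _ _ _ ev, where X = "{..<m} \<times> {..<n}" and F = "Phi (pertA C A \<epsilon>) n"
            and w = "\<lambda>x. e (fst x) / dd (snd x)" and dd = "Dw dd n"])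
        show "finite ({..<m} \<times> {..<n})" by simp
      next
        fix r c assume rc: "r < ?N" "c < ?N"
        show "compound2 (Mf \<epsilon>) $$ (r, c) = (\<Sum>x\<in>{..<m} \<times> {..<n}. Phi (pertA C A \<epsilon>) n r x * (e (fst x) / dd (snd x)) * Phi (pertA C A \<epsilon>) n c x * Dw dd n c)"
          unfolding Mf_def by (rule compound_form[OF pertA_carrier[OF Ac] pertB_carrier[OF Bc] dd rel rc])
      next
        fix x assume "x \<in> {..<m} \<times> {..<n}"
        hence "fst x < m" "snd x < n" by auto
        thus "e (fst x) / dd (snd x) \<ge> 0" using e dd by (simp add: less_imp_le)
      next
        fix r assume "r < ?N"
        from wedge_pairs_bound[OF this] show "Dw dd n r > 0" unfolding Dw_def using dd by simp
      qed
    qed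
  qed
  show "positive_semistable (A * B)"
    unfolding positive_semistable_def
  proof (intro conjI allI impI)
    show "square_mat (A * B)" using Ac Bc by simp
    fix z assume ev: "eigenvalue (map_mat complex_of_real (A * B)) z"
    show "Re z \<ge> 0"
    proof (rule ccontr)
      assume "\<not> Re z \<ge> 0"
      hence z: "Re z < 0" by simp
      have "\<not> eigenvalue (map_mat complex_of_real (A * B)) z"
      proof (rule limit_P(2)[OF Mfc ABc _ Mlim z])
        fix \<epsilon> \<mu> assume eps: "(\<epsilon>::real) > 0" and ev: "eigenvalue (map_mat complex_of_real (Mf \<epsilon>)) \<mu>"
        from Mform[OF eps] obtain dd e where dd: "\<forall>i<n. dd i > 0" and e: "\<forall>j<m. e j > 0"
          and form: "\<forall>r<n. \<forall>c<n. Mf \<epsilon> $$ (r,c) = (\<Sum>p\<in>{..<m}. pertA C A \<epsilon> $$ (r,p) * e p * pertA C A \<epsilon> $$ (c,p) * dd c)"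
          by blast
        have Mc: "Mf \<epsilon> \<in> carrier_mat n n" by (rule Mfc)
        show "Im \<mu> = 0 \<and> Re \<mu> \<ge> 0"
        proof (rule eig_real_nonneg[OF _ _ _ _ _ ev, where X = "{..<m}" and F = "\<lambda>r p. pertA C A \<epsilon> $$ (r,p)" and w = e and dd = dd and k = n])
          show "map_mat complex_of_real (Mf \<epsilon>) \<in> carrier_mat n n" using Mc by simp
          show "finite {..<m}" by simp
        next
          fix r c assume rc: "r < n" "c < n"
          have "map_mat complex_of_real (Mf \<epsilon>) $$ (r,c) = complex_of_real (Mf \<epsilon> $$ (r,c))" using Mc rc by simp
          thus "map_mat complex_of_real (Mf \<epsilon>) $$ (r,c) = complex_of_real (\<Sum>p\<in>{..<m}. pertA C A \<epsilon> $$ (r,p) * e p * pertA C A \<epsilon> $$ (c,p) * dd c)"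
            using form rc by simp
        next
          fix x assume "x \<in> {..<m}" thus "e x \<ge> 0" using e by (simp add: less_imp_le)
        next
          fix r assume "r < n" thus "dd r > 0" using dd by simp
        qed
      qed auto
      thus False using ev by simp
    qed
  qed
qed


end
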